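(* Consider the online submodular partition problem (notation in context) with $m\ge 2$ users, in which resources arrive one at a time in an arbitrary order $j_1,\dots,j_n$ (a permutation of $\mathcal{R}$) and each must be irrevocably assigned on arrival. Let $G$ be the output of GREEDY-ON on this arrival order, with $u_t$ the user chosen at time $t$, $d^o_t$ the discriminant at time $t$ and $c_{u_t}$ the curvature of $Z_{u_t}$. Let $\Omega$ be an optimal (offline) partition with $Z(\Omega)>0$. Then for every arrival order, $$\frac{Z(G)}{Z(\Omega)}\ \ge\ \min\left(1,\ \frac{1}{\max_{1\le t\le n}\left\{\frac{1}{d^o_t}+c_{u_t}\right\}}\right),$$ with conventions $1/\infty=0$, $1/0=\infty$. Consequently the competitive ratio of GREEDY-ON is at least the minimum over arrival orders of the right-hand side.
   Context: Resources $\mathcal{R}$, $|\mathcal{R}|=n$; users $\mathcal{U}$, $|\mathcal{U}|=m$; each user $u$ has a monotone submodular $Z_u:2^{\mathcal{R}}\to\mathbb{R}$ with $Z_u(\emptyset)=0$. For $S\subseteq\mathcal{U}\times\mathcal{R}$, $S_u=\{r:(u,r)\in S\}$ and $Z(S)=\sum_u Z_u(S_u)$. A partition assigns each resource to exactly one user (a set of pairs in which each resource appears exactly once); $\Omega$ is a partition maximizing $Z$. $\rho^u_r(S)=Z_u(S_u\cup\{r\})-Z_u(S_u)$. Curvature of $Z_u$: $c_u=1-\min\{(Z_u(S\cup\{r\})-Z_u(S))/Z_u(\{r\}): S\subseteq\mathcal{R}, r\in\mathcal{R}\setminus S, Z_u(\{r\})>0\}$. GREEDY-ON: $G^0=\emptyset$;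 at time $t=1,\dots,n$, when resource $j_t$ arrives, assign it to a user $u_t\in\arg\max_u\rho^u_{j_t}(G^{t-1})$, breaking ties in favour of the user with least curvature $c_u$; set $G^t=G^{t-1}\cup\{(u_t,j_t)\}$; output $G=G^n$. Discriminant at time $t$: $d^o_t=\rho^{u_t}_{j_t}(G^{t-1})/\max_{u'\neq u_t}\rho^{u'}_{j_t}(G^{t-1})$ (set to $\infty$ if the denominator is $0$). *)

theory Defs
  imports Complex_Main "HOL-Library.Extended_Real"
begin

definition monotone_submod :: "'r set \<Rightarrow> ('r set \<Rightarrow> real) \<Rightarrow> bool" where
  "monotone_submod R f \<longleftrightarrow>
     f {} = 0 \<and>
     (\<forall>A B. A \<subseteq> B \<and> B \<subseteq> R \<longrightarrow> f A \<le> f B) \<and>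
     (\<forall>A B x. A \<subseteq> B \<and> B \<subseteq> R \<and> x \<in> R - B \<longrightarrow>
        f (B \<union> {x}) - f B \<le> f (A \<union> {x}) - f A)"

definition user_part :: "('u \<times> 'r) set \<Rightarrow> 'u \<Rightarrow> 'r set" where
  "user_part S u = {r. (u, r) \<in> S}"

definition Ztot :: "'u set \<Rightarrow> ('u \<Rightarrow> 'r set \<Rightarrow> real) \<Rightarrow> ('u \<times> 'r) set \<Rightarrow> real" where
  "Ztot U Z S = (\<Sum>u\<in>U. Z u (user_part S u))"

definition rho :: "('u \<Rightarrow> 'r set \<Rightarrow> real) \<Rightarrow> 'u \<Rightarrow> 'r \<Rightarrow> ('u \<times> 'r) set \<Rightarrow> real" where
  "rho Z u r S = Z u (user_part S u \<union> {r}) - Z u (user_part S u)"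

definition is_partition :: "'u set \<Rightarrow> 'r set \<Rightarrow> ('u \<times> 'r) set \<Rightarrow> bool" where
  "is_partition U R S \<longleftrightarrow> S \<subseteq> U \<times> R \<and> (\<forall>r\<in>R. \<exists>!u. (u, r) \<in> S)"

definition optimal_partition ::
  "'u set \<Rightarrow> 'r set \<Rightarrow> ('u \<Rightarrow> 'r set \<Rightarrow> real) \<Rightarrow> ('u \<times> 'r) set \<Rightarrow> bool" where
  "optimal_partition U R Z \<Omega> \<longleftrightarrow> is_partition U R \<Omega> \<and>
     (\<forall>S. is_partition U R S \<longrightarrow> Ztot U Z S \<le> Ztot U Z \<Omega>)"

(* curvature c_u = 1 - min { (f(S \<union> {r}) - f S) / f {r} : S \<subseteq> R, r \<in> R - S, f {r} > 0 };
   convention: 0 if no r has f {r} > 0 (then f is identically zero) *)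
definition curv_set :: "'r set \<Rightarrow> ('r set \<Rightarrow> real) \<Rightarrow> real set" where
  "curv_set R f = {(f (S \<union> {r}) - f S) / f {r} | S r. S \<subseteq> R \<and> r \<in> R - S \<and> f {r} > 0}"

definition curvature :: "'r set \<Rightarrow> ('r set \<Rightarrow> real) \<Rightarrow> real" where
  "curvature R f = (if curv_set R f = {} then 0 else 1 - Min (curv_set R f))"

(* greedy partial assignment G^t (times indexed from 0): first t arrivals *)
definition Gt :: "'u list \<Rightarrow> 'r list \<Rightarrow> nat \<Rightarrow> ('u \<times> 'r) set" where
  "Gt us js t = {(us ! i, js ! i) | i. i < t}"

(* us is a valid run of GREEDY-ON on arrival order js:
   at time t, resource js!t goes to us!t, a maximiser of the marginal gain,
   ties broken in favour of least curvature (remaining ties arbitrary) *)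
definition greedy_on_run ::
  "'u set \<Rightarrow> 'r set \<Rightarrow> ('u \<Rightarrow> 'r set \<Rightarrow> real) \<Rightarrow> 'r list \<Rightarrow> 'u list \<Rightarrow> bool" where
  "greedy_on_run U R Z js us \<longleftrightarrow> length us = length js \<and>
     (\<forall>t < length js. us ! t \<in> U \<and>
        (\<forall>u\<in>U. rho Z u (js ! t) (Gt us js t) \<le> rho Z (us ! t) (js ! t) (Gt us js t)) \<and>
        (\<forall>u\<in>U. rho Z u (js ! t) (Gt us js t) = rho Z (us ! t) (js ! t) (Gt us js t)
              \<longrightarrow> curvature R (Z (us ! t)) \<le> curvature R (Z u)))"

definition discriminant ::
  "'u set \<Rightarrow> ('u \<Rightarrow> 'r set \<Rightarrow> real) \<Rightarrow> 'r list \<Rightarrow> 'u list \<Rightarrow> nat \<Rightarrow> ereal" where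
  "discriminant U Z js us t =
     (let num = rho Z (us ! t) (js ! t) (Gt us js t);
          den = Max ((\<lambda>u'. rho Z u' (js ! t) (Gt us js t)) ` (U - {us ! t}))
      in if den = 0 then \<infinity> else ereal (num / den))"

end

theory Submission
  imports Defs
begin

lemma ms_mono: "monotone_submod R f \<Longrightarrow> A \<subseteq> B \<Longrightarrow> B \<subseteq> R \<Longrightarrow> f A \<le> f B"
  unfolding monotone_submod_def by blast

lemma ms_sub: "monotone_submod R f \<Longrightarrow> A \<subseteq> B \<Longrightarrow> B \<subseteq> R \<Longrightarrow> x \<in> R - B \<Longrightarrow>
   f (B \<union> {x}) - f B \<le> f (A \<union> {x}) - f A"
  unfolding monotone_submod_def by blast

lemma ms_empty: "monotone_submod R f \<Longrightarrow> f {} = 0"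
  unfolding monotone_submod_def by blast

lemma curv_bound:
  assumes ms: "monotone_submod R f" and fin: "finite R" and A: "A \<subseteq> R" and j: "j \<in> R - A"
    and B: "B \<subseteq> A"
  shows "f (A \<union> {j}) - f A \<ge> (1 - curvature R f) * (f (B \<union> {j}) - f B)"
proof (cases "f {j} > 0")
  case True
  define x where "x = (f (A \<union> {j}) - f A) / f {j}"
  have xin: "x \<in> curv_set R f" unfolding x_def curv_set_def using A j True by blast
  have finc: "finite (curv_set R f)"
  proof -
    have "curv_set R f \<subseteq> (\<lambda>(S,r). (f (S \<union> {r}) - f S) / f {r}) ` (Pow R \<times> R)"
      unfolding curv_set_def by auto
    moreover have "finite (Pow R \<times> R)" using fin by simp
    ultimately show ?thesis by (meson finite_surj)
  qed
  have ne: "curv_set R f \<noteq> {}" using xin by blast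
  have cdef: "1 - curvature R f = Min (curv_set R f)" unfolding curvature_def using ne by simp
  have minle: "Min (curv_set R f) \<le> x" using finc xin by simp
  have "Min (curv_set R f) \<in> curv_set R f" using finc ne by simp
  then obtain S r where Sr: "Min (curv_set R f) = (f (S \<union> {r}) - f S) / f {r}" "S \<subseteq> R" "r \<in> R - S" "f {r} > 0"
    unfolding curv_set_def by blast
  have "f S \<le> f (S \<union> {r})" using ms_mono[OF ms, of S "S \<union> {r}"] Sr by auto
  hence min0: "Min (curv_set R f) \<ge> 0" using Sr by simp
  have g: "f (B \<union> {j}) - f B \<le> f ({} \<union> {j}) - f {}"
    using ms_sub[OF ms, of "{}" B j] A B j by auto
  hence g': "f (B \<union> {j}) - f B \<le> f {j}" using ms_empty[OF ms] by simp
  have "(1 - curvature R f) * (f (B \<union> {j}) - f B) \<le> Min (curv_set R f) * f {j}"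
    using cdef g' min0 by (simp add: mult_left_mono)
  also have "\<dots> \<le> x * f {j}" using minle True by (simp add: mult_right_mono)
  also have "\<dots> = f (A \<union> {j}) - f A" unfolding x_def using True by simp
  finally show ?thesis .
next
  case False
  have "f {} \<le> f {j}" using ms_mono[OF ms, of "{}" "{j}"] j by auto
  hence fj: "f {j} = 0" using False ms_empty[OF ms] by simp
  have g: "f (B \<union> {j}) - f B \<le> f ({} \<union> {j}) - f {}"
    using ms_sub[OF ms, of "{}" B j] A B j by auto
  have g2: "f B \<le> f (B \<union> {j})" using ms_mono[OF ms, of B "B \<union> {j}"] A B j by auto
  have "f (B \<union> {j}) - f B = 0" using g g2 fj ms_empty[OF ms] by simp
  moreover have "f A \<le> f (A \<union> {j})" using ms_mono[OF ms, of A "A \<union> {j}"] A j by auto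
  ultimately show ?thesis by simp
qed

lemma sum_single:
  fixes Z :: "'u \<Rightarrow> 'r set \<Rightarrow> real"
  assumes "finite U" "u \<in> U" "\<forall>v\<in>U. P v = B v \<union> (if v = u then {j} else {})"
  shows "(\<Sum>v\<in>U. Z v (P v)) = (\<Sum>v\<in>U. Z v (B v)) + (Z u (B u \<union> {j}) - Z u (B u))"
proof -
  have "(\<Sum>v\<in>U. Z v (P v)) = (\<Sum>v\<in>U. Z v (B v) + (if v = u then Z u (B u \<union> {j}) - Z u (B u) else 0))"
    by (rule sum.cong) (auto simp: assms(3) algebra_simps)
  also have "\<dots> = (\<Sum>v\<in>U. Z v (B v)) + (Z u (B u \<union> {j}) - Z u (B u))"
    by (simp add: sum.distrib assms)
  finally show ?thesis .
qed


theorem theorem5: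
  fixes U :: "'u set" and R :: "'r set" and Z :: "'u \<Rightarrow> 'r set \<Rightarrow> real"
    and \<Omega> :: "('u \<times> 'r) set" and js :: "'r list" and us :: "'u list"
  assumes "finite U" and "card U \<ge> 2" and "finite R"
    and "\<forall>u\<in>U. monotone_submod R (Z u)"
    and "optimal_partition U R Z \<Omega>" and "Ztot U Z \<Omega> > 0"
    and "distinct js" and "set js = R"
    and "greedy_on_run U R Z js us"
  shows "ereal (Ztot U Z (Gt us js (length js)) / Ztot U Z \<Omega>) \<ge>
           min 1 (inverse (Max ((\<lambda>t. inverse (discriminant U Z js us t)
                                    + ereal (curvature R (Z (us ! t)))) ` {..<length js})))"
proof -
  define n where "n = length js"
  define G where "G k = Gt us js k" for k
  define g where "g k = rho Z (us!k) (js!k) (G k)" for k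
  define den where "den k = Max ((\<lambda>u'. rho Z u' (js!k) (G k)) ` (U - {us!k}))" for k
  define e where "e k = (if den k = 0 then 0 else den k / g k)" for k
  define c where "c k = curvature R (Z (us!k))" for k
  define M where "M = Max ((\<lambda>t. e t + c t) ` {..<n})"
  define K where "K = max 1 M"
  define Om where "Om k = {p \<in> \<Omega>. snd p \<in> set (drop k js)}" for k
  define Psi where "Psi k = Ztot U Z (G k \<union> Om k)" for k
  have run: "length us = n" "\<And>t. t < n \<Longrightarrow> us!t \<in> U"
     "\<And>t u. t < n \<Longrightarrow> u \<in> U \<Longrightarrow> rho Z u (js!t) (G t) \<le> g t"
    using assms(9) unfolding greedy_on_run_def n_def G_def g_def by auto
  have jsR: "\<And>t. t < n \<Longrightarrow> js!t \<in> R" using assms(8) n_def by auto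
  have part: "\<Omega> \<subseteq> U \<times> R" "\<And>r. r \<in> R \<Longrightarrow> \<exists>!u. (u,r) \<in> \<Omega>"
    using assms(5) unfolding optimal_partition_def is_partition_def by auto
  have ms: "\<And>u. u \<in> U \<Longrightarrow> monotone_submod R (Z u)" using assms(4) by auto
  have GR: "\<And>k u. k \<le> n \<Longrightarrow> user_part (G k) u \<subseteq> R"
    unfolding G_def Gt_def user_part_def using jsR by fastforce
  have rho_nn: "\<And>u t. u \<in> U \<Longrightarrow> t < n \<Longrightarrow> 0 \<le> rho Z u (js!t) (G t)"
  proof -
    fix u t assume u: "u \<in> U" and t: "t < n"
    show "0 \<le> rho Z u (js!t) (G t)"
      unfolding rho_def
      using ms_mono[OF ms[OF u], of "user_part (G t) u" "user_part (G t) u \<union> {js!t}"]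
        GR[of t u] jsR[OF t] t by auto
  qed
  have den_props: "0 \<le> den t \<and> den t \<le> g t" if t: "t < n" for t
  proof -
    have "card (U - {us!t}) \<ge> 1" using assms(1,2) run(2)[OF t] by (simp add: card_Diff_singleton)
    hence ne: "U - {us!t} \<noteq> {}" by (metis card.empty not_one_le_zero)
    have fin: "finite ((\<lambda>u'. rho Z u' (js!t) (G t)) ` (U - {us!t}))" using assms(1) by simp
    have "den t \<in> (\<lambda>u'. rho Z u' (js!t) (G t)) ` (U - {us!t})"
      unfolding den_def using fin ne by (intro Max_in) auto
    then obtain v where v: "v \<in> U - {us!t}" "den t = rho Z v (js!t) (G t)" by blast
    show ?thesis using v rho_nn[of v t] run(3)[of t v] t by auto
  qed
  have n0: "n > 0"
  proof (rule ccontr)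
    assume "\<not> n > 0"
    hence "R = {}" using assms(8) n_def by auto
    hence "\<And>u. user_part \<Omega> u = {}" using part(1) unfolding user_part_def by auto
    hence "Ztot U Z \<Omega> = 0" unfolding Ztot_def by (simp add: ms_empty[OF ms])
    thus False using assms(6) by simp
  qed
  have ek_le: "e k + c k \<le> K" if "k < n" for k
  proof -
    have "e k + c k \<le> M" unfolding M_def using that by (intro Max_ge) auto
    thus ?thesis unfolding K_def by simp
  qed
  have step: "Psi (Suc k) - Psi k \<ge> (1 - K) * g k \<and> Ztot U Z (G (Suc k)) = Ztot U Z (G k) + g k"
    if kn: "k < n" for k
  proof -
    define u where "u = us!k"
    define j where "j = js!k"
    have uU: "u \<in> U" using run(2) kn u_def by simp
    have jR: "j \<in> R" using jsR kn j_def by simp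
    obtain w where w: "(w,j) \<in> \<Omega>" and ouni: "\<forall>v. (v,j)\<in>\<Omega> \<longrightarrow> v = w" using part(2)[OF jR] by blast
    have oU: "w \<in> U" using part(1) w by auto
    define A where "A v = user_part (G k \<union> Om (Suc k)) v" for v
    have Gsuc: "G (Suc k) = G k \<union> {(u,j)}" unfolding G_def Gt_def u_def j_def by (auto simp: less_Suc_eq)
    have dk: "drop k js = js!k # drop (Suc k) js"
      using Cons_nth_drop_Suc[of k js] n_def kn by simp
    have dropk: "set (drop k js) = insert j (set (drop (Suc k) js))"
      unfolding dk j_def by simp
    have Omk: "Om k = Om (Suc k) \<union> {(w,j)}"
    proof (rule set_eqI)
      fix p :: "'u \<times> 'r"
      obtain a b where p: "p = (a,b)" by (cases p)
      have "(a,b) \<in> \<Omega> \<Longrightarrow> b = j \<Longrightarrow> a = w" using ouni by blast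
      then show "p \<in> Om k \<longleftrightarrow> p \<in> Om (Suc k) \<union> {(w,j)}"
        unfolding Om_def p dropk using w by auto
    qed
    have jnG: "j \<notin> user_part (G k) v" for v
    proof
      assume "j \<in> user_part (G k) v"
      then obtain i where i: "i < k" "js!i = js!k" unfolding G_def Gt_def user_part_def j_def by auto
      thus False using nth_eq_iff_index_eq[OF assms(7), of i k] kn n_def by simp
    qed
    have jnO: "j \<notin> set (drop (Suc k) js)"
    proof -
      have l: "k < length (take (Suc k) js)" using kn n_def by simp
      have "take (Suc k) js ! k = j" unfolding j_def by simp
      hence "j \<in> set (take (Suc k) js)" using nth_mem[OF l] by simp
      thus ?thesis using set_take_disj_set_drop_if_distinct[OF assms(7), of "Suc k" "Suc k"] by auto
    qed
    have ARsub: "A v \<subseteq> R" for v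
      using GR[of k v] kn part(1) unfolding A_def Om_def user_part_def by auto
    have jA: "j \<notin> A v" for v using jnG[of v] jnO unfolding A_def Om_def user_part_def by auto
    have GA: "user_part (G k) v \<subseteq> A v" for v unfolding A_def user_part_def by auto
    have e1: "\<forall>v\<in>U. user_part (G k \<union> Om k) v = A v \<union> (if v = w then {j} else {})"
      unfolding A_def user_part_def Omk by auto
    have e2: "\<forall>v\<in>U. user_part (G (Suc k) \<union> Om (Suc k)) v = A v \<union> (if v = u then {j} else {})"
      unfolding A_def user_part_def Gsuc by auto
    have e3: "\<forall>v\<in>U. user_part (G (Suc k)) v = user_part (G k) v \<union> (if v = u then {j} else {})"
      unfolding user_part_def Gsuc by auto
    have P1: "Psi k = (\<Sum>v\<in>U. Z v (A v)) + (Z w (A w \<union> {j}) - Z w (A w))"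
      unfolding Psi_def Ztot_def by (rule sum_single[OF assms(1) oU e1])
    have P2: "Psi (Suc k) = (\<Sum>v\<in>U. Z v (A v)) + (Z u (A u \<union> {j}) - Z u (A u))"
      unfolding Psi_def Ztot_def by (rule sum_single[OF assms(1) uU e2])
    have P3: "Ztot U Z (G (Suc k)) = Ztot U Z (G k) + g k"
      unfolding Ztot_def g_def rho_def using sum_single[OF assms(1) uU e3] u_def j_def by simp
    have Du: "Z u (A u \<union> {j}) - Z u (A u) \<ge> (1 - c k) * g k"
      using curv_bound[OF ms[OF uU] assms(3) ARsub[of u] _ GA[of u]] jA jR
      unfolding g_def rho_def c_def u_def j_def by auto
    have Do: "Z w (A w \<union> {j}) - Z w (A w) \<le> rho Z w j (G k)"
      unfolding rho_def using ms_sub[OF ms[OF oU] GA[of w] ARsub[of w]] jA jR by auto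
    have gnn: "g k \<ge> 0" using rho_nn[OF uU kn] unfolding g_def u_def j_def by simp
    have K1: "K \<ge> 1" unfolding K_def by simp
    have "Z u (A u \<union> {j}) - Z u (A u) - (Z w (A w \<union> {j}) - Z w (A w)) \<ge> (1 - K) * g k"
    proof (cases "w = u")
      case True
      have "(1 - K) * g k \<le> 0" using K1 gnn by (simp add: mult_nonpos_nonneg)
      thus ?thesis using True by simp
    next
      case False
      have "rho Z w j (G k) \<le> den k" unfolding den_def using False oU assms(1) u_def j_def
        by (intro Max_ge) auto
      moreover have "den k \<le> g k * e k"
      proof (cases "den k = 0")
        case True thus ?thesis unfolding e_def by simp
      next
        case False
        have "g k > 0" using den_props[OF kn] False by simp
        thus ?thesis unfolding e_def using False by simp
      qed
      ultimately have "Z w (A w \<union> {j}) - Z w (A w) \<le> g k * e k" using Do by simp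
      moreover have "g k * (1 - (e k + c k)) \<ge> g k * (1 - K)"
        using ek_le[OF kn] gnn by (intro mult_left_mono) auto
      ultimately show ?thesis using Du by (simp add: algebra_simps)
    qed
    thus ?thesis using P1 P2 P3 by simp
  qed
  have Gz: "G 0 = {}" unfolding G_def Gt_def by simp
  have Z0: "Ztot U Z {} = 0" unfolding Ztot_def user_part_def by (simp add: ms_empty[OF ms])
  have Om0: "Om 0 = \<Omega>" unfolding Om_def using part(1) assms(8) by auto
  have inv: "Psi k - Ztot U Z \<Omega> \<ge> (1 - K) * Ztot U Z (G k)" if "k \<le> n" for k
    using that
  proof (induction k)
    case 0
    then show ?case unfolding Psi_def using Gz Z0 Om0 by simp
  next
    case (Suc k)
    hence "k < n" by simp
    from step[OF this] Suc show ?case by (simp add: algebra_simps)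
  qed
  have Omn: "Om n = {}" unfolding Om_def n_def by simp
  have fin_ineq: "K * Ztot U Z (G n) \<ge> Ztot U Z \<Omega>"
    using inv[of n] Omn unfolding Psi_def by (simp add: algebra_simps)
  have term_eq: "inverse (discriminant U Z js us t) + ereal (curvature R (Z (us ! t))) = ereal (e t + c t)"
    if t: "t < n" for t
  proof -
    have d: "discriminant U Z js us t = (if den t = 0 then \<infinity> else ereal (g t / den t))"
      by (simp add: discriminant_def den_def g_def G_def Let_def)
    have "inverse (discriminant U Z js us t) = ereal (e t)"
    proof (cases "den t = 0")
      case True thus ?thesis using d unfolding e_def by simp
    next
      case False
      have "g t > 0" "den t > 0" using den_props[OF t] False by auto
      thus ?thesis using d False unfolding e_def by simp
    qed
    thus ?thesis unfolding c_def by simp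
  qed
  have imgeq: "(\<lambda>t. inverse (discriminant U Z js us t) + ereal (curvature R (Z (us ! t)))) ` {..<n}
      = ereal ` ((\<lambda>t. e t + c t) ` {..<n})"
    using term_eq by (auto simp: image_image)
  have mono_e: "mono ereal" by (auto simp: mono_def)
  have MX: "Max (ereal ` ((\<lambda>t. e t + c t) ` {..<n})) = ereal M"
  proof -
    have "ereal M = Max (ereal ` ((\<lambda>t. e t + c t) ` {..<n}))"
      unfolding M_def by (rule mono_Max_commute[OF mono_e]) (use n0 in auto)
    thus ?thesis by simp
  qed
  have Zp: "Ztot U Z \<Omega> > 0" by (rule assms(6))
  have goal: "ereal (Ztot U Z (G n) / Ztot U Z \<Omega>) \<ge> min 1 (inverse (ereal M))"
  proof (cases "M \<le> 1")
    case True
    hence "K = 1" unfolding K_def by simp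
    hence "Ztot U Z (G n) / Ztot U Z \<Omega> \<ge> 1" using fin_ineq Zp by simp
    hence "ereal (Ztot U Z (G n) / Ztot U Z \<Omega>) \<ge> 1" by simp
    thus ?thesis by (meson min.cobounded1 order_trans)
  next
    case False
    hence KM: "K = M" "M > 0" unfolding K_def by auto
    have "Ztot U Z (G n) / Ztot U Z \<Omega> \<ge> inverse M" using fin_ineq Zp KM
      by (simp add: field_simps)
    hence "ereal (Ztot U Z (G n) / Ztot U Z \<Omega>) \<ge> inverse (ereal M)" using KM by simp
    thus ?thesis by (meson min.cobounded2 order_trans)
  qed
  show ?thesis using goal imgeq MX unfolding G_def n_def by simp
qed

end
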